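(* Let $(\Sigma,E)$ be an algebraic theory and let $(T,\eta,\mu)=(T_{\Sigma,E},\eta_{\Sigma,E},\mu_{\Sigma,E})$ be its free monad on $\mathbf{Set}$. Then the algebraic theory $(\Sigma^{\mathrm{s}},E^{\mathrm{s}})$ is an algebraic presentation of the semifree monad $(T^{\mathrm{s}},\eta^{\mathrm{s}},\mu^{\mathrm{s}})$ on $T$, i.e. the monad $T_{\Sigma^{\mathrm{s}},E^{\mathrm{s}}}$ is isomorphic (as a monad) to $T^{\mathrm{s}}$.
   Context: An algebraic signature $\Sigma$ is a set of operation symbols, each with an arity $n\in\mathbb{N}$ (written $(\mathsf{op}:n)$). $\mathrm{Var}=\{v_1,v_2,\dots\}$ is a fixed set of variables; an equation is a pair of $\Sigma$-terms over $\mathrm{Var}$; an algebraic theory $(\Sigma,E)$ is a signature with a set $E$ of equations. The free monad $T_{\Sigma,E}$ of $(\Sigma,E)$ sends a set $X$ to the set of $\Sigma$-terms over $X$ modulo the smallest congruence containing all substitution instances of equations of $E$; its unit sends $x$ to the class $\overline{x}$, and its multiplication flattens terms: $\overline{t[\overline{t_i}/v_i]}\mapsto\overline{t[t_i/v_i]}$. An algebraic theory $(\Sigma',E')$ is an algebraic presentation of a $\mathbf{Set}$-monad $M$ if $T_{\Sigma',E'}\cong M$ as monads. For a monad $(M,\eta,\mu)$ on a category with finite coproducts, the semifree monad is $M^{\mathrm{s}}=\mathrm{Id}+M$ with unit $\eta^{\mathrm{s}}=\mathrm{inl}$ and multiplication $\mu^{\mathrm{s}}=[\mathrm{id}_{\mathrm{Id}+M},\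 \mathrm{inr}\circ\mu\circ M[\eta,\mathrm{id}_M]]$. Given $(\Sigma,E)$, the theory $(\Sigma^{\mathrm{s}},E^{\mathrm{s}})$ has signature $\Sigma^{\mathrm{s}}=\Sigma\uplus\{\mathsf{a}:1\}$ and equations $E^{\mathrm{s}}$ consisting of: $\mathsf{a}\mathsf{a}v_1=\mathsf{a}v_1$; $\mathsf{a}(\mathsf{op}(v_1,\dots,v_n))=\mathsf{op}(v_1,\dots,v_n)$ and $\mathsf{op}(\mathsf{a}v_1,\dots,\mathsf{a}v_n)=\mathsf{op}(v_1,\dots,v_n)$ for every $(\mathsf{op}:n)\in\Sigma$; and $t(\mathsf{a}v_1,\dots,\mathsf{a}v_n)=s(\mathsf{a}v_1,\dots,\mathsf{a}v_n)$ for every equation $t(v_1,\dots,v_n)=s(v_1,\dots,v_n)$ in $E$. *)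

theory Defs
  imports Main
begin

datatype ('f, 'v) trm = Var 'v | Op 'f "('f, 'v) trm list"

primrec subst :: "('v \<Rightarrow> ('f, 'w) trm) \<Rightarrow> ('f, 'v) trm \<Rightarrow> ('f, 'w) trm" where
  "subst \<sigma> (Var x) = \<sigma> x"
| "subst \<sigma> (Op f ts) = Op f (map (subst \<sigma>) ts)"

inductive_set terms :: "'f set \<Rightarrow> ('f \<Rightarrow> nat) \<Rightarrow> 'v set \<Rightarrow> ('f, 'v) trm set"
  for Sig ar V where
  var: "x \<in> V \<Longrightarrow> Var x \<in> terms Sig ar V"
| op: "f \<in> Sig \<Longrightarrow> length ts = ar f \<Longrightarrow> (\<forall>t \<in> set ts. t \<in> terms Sig ar V) \<Longrightarrow> Op f ts \<in> terms Sig ar V"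

text \<open>Equations are pairs of terms over Var = nat (v_1, v_2, ... are 0, 1, ...).\<close>

definition is_theory :: "'f set \<Rightarrow> ('f \<Rightarrow> nat) \<Rightarrow> (('f, nat) trm \<times> ('f, nat) trm) set \<Rightarrow> bool" where
  "is_theory Sig ar E \<longleftrightarrow> (\<forall>(l, r) \<in> E. l \<in> terms Sig ar UNIV \<and> r \<in> terms Sig ar UNIV)"

inductive eqv :: "'f set \<Rightarrow> ('f \<Rightarrow> nat) \<Rightarrow> (('f, nat) trm \<times> ('f, nat) trm) set \<Rightarrow> 'v set
                  \<Rightarrow> ('f, 'v) trm \<Rightarrow> ('f, 'v) trm \<Rightarrow> bool"
  for Sig ar E V where
  refl: "t \<in> terms Sig ar V \<Longrightarrow> eqv Sig ar E V t t"
| sym: "eqv Sig ar E V s t \<Longrightarrow> eqv Sig ar E V t s"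
| trans: "eqv Sig ar E V s t \<Longrightarrow> eqv Sig ar E V t u \<Longrightarrow> eqv Sig ar E V s u"
| cong: "f \<in> Sig \<Longrightarrow> length ts = ar f \<Longrightarrow> list_all2 (eqv Sig ar E V) ts us
          \<Longrightarrow> eqv Sig ar E V (Op f ts) (Op f us)"
| ax: "(l, r) \<in> E \<Longrightarrow> (\<forall>i. \<sigma> i \<in> terms Sig ar V)
          \<Longrightarrow> eqv Sig ar E V (subst \<sigma> l) (subst \<sigma> r)"

section \<open>The free monad T_{Sig,E} (on sets V, represented as subsets of types)\<close>

definition cls :: "'f set \<Rightarrow> ('f \<Rightarrow> nat) \<Rightarrow> (('f, nat) trm \<times> ('f, nat) trm) set \<Rightarrow> 'v set
                   \<Rightarrow> ('f, 'v) trm \<Rightarrow> ('f, 'v) trm set" where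
  "cls Sig ar E V t = {s. eqv Sig ar E V t s}"

definition Tc :: "'f set \<Rightarrow> ('f \<Rightarrow> nat) \<Rightarrow> (('f, nat) trm \<times> ('f, nat) trm) set \<Rightarrow> 'v set
                  \<Rightarrow> ('f, 'v) trm set set" where
  "Tc Sig ar E V = cls Sig ar E V ` terms Sig ar V"

definition Tmap :: "'f set \<Rightarrow> ('f \<Rightarrow> nat) \<Rightarrow> (('f, nat) trm \<times> ('f, nat) trm) set \<Rightarrow> 'w set
                    \<Rightarrow> ('v \<Rightarrow> 'w) \<Rightarrow> ('f, 'v) trm set \<Rightarrow> ('f, 'w) trm set" where
  "Tmap Sig ar E W f C = {s. \<exists>t \<in> C. eqv Sig ar E W (map_trm id f t) s}"

definition Tunit :: "'f set \<Rightarrow> ('f \<Rightarrow> nat) \<Rightarrow> (('f, nat) trm \<times> ('f, nat) trm) set \<Rightarrow> 'v set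
                     \<Rightarrow> 'v \<Rightarrow> ('f, 'v) trm set" where
  "Tunit Sig ar E V x = cls Sig ar E V (Var x)"

definition Tmult :: "'f set \<Rightarrow> ('f \<Rightarrow> nat) \<Rightarrow> (('f, nat) trm \<times> ('f, nat) trm) set \<Rightarrow> 'v set
                     \<Rightarrow> ('f, ('f, 'v) trm set) trm set \<Rightarrow> ('f, 'v) trm set" where
  "Tmult Sig ar E V C = {s. \<exists>t \<in> C. \<exists>\<sigma>. (\<forall>c \<in> Tc Sig ar E V. \<sigma> c \<in> c)
                                  \<and> eqv Sig ar E V (subst \<sigma> t) s}"

definition SFc :: "'f set \<Rightarrow> ('f \<Rightarrow> nat) \<Rightarrow> (('f, nat) trm \<times> ('f, nat) trm) set \<Rightarrow> 'v set
                   \<Rightarrow> ('v + ('f, 'v) trm set) set" where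
  "SFc Sig ar E V = Inl ` V \<union> Inr ` Tc Sig ar E V"

definition SFmap :: "'f set \<Rightarrow> ('f \<Rightarrow> nat) \<Rightarrow> (('f, nat) trm \<times> ('f, nat) trm) set \<Rightarrow> 'w set
                     \<Rightarrow> ('v \<Rightarrow> 'w) \<Rightarrow> 'v + ('f, 'v) trm set \<Rightarrow> 'w + ('f, 'w) trm set" where
  "SFmap Sig ar E W f = map_sum f (Tmap Sig ar E W f)"

definition SFunit :: "'v \<Rightarrow> 'v + ('f, 'v) trm set" where
  "SFunit = Inl"

definition SFmult :: "'f set \<Rightarrow> ('f \<Rightarrow> nat) \<Rightarrow> (('f, nat) trm \<times> ('f, nat) trm) set \<Rightarrow> 'v set
     \<Rightarrow> ('v + ('f, 'v) trm set) + ('f, 'v + ('f, 'v) trm set) trm set \<Rightarrow> 'v + ('f, 'v) trm set" where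
  "SFmult Sig ar E V = case_sum id
     (\<lambda>C. Inr (Tmult Sig ar E V (Tmap Sig ar E (Tc Sig ar E V) (case_sum (Tunit Sig ar E V) id) C)))"

text \<open>Sig^s = Sig \<uplus> {a : 1}: Some f for f in Sig, None for the new unary symbol a.\<close>
definition sigS :: "'f set \<Rightarrow> 'f option set" where
  "sigS Sig = insert None (Some ` Sig)"

definition arS :: "('f \<Rightarrow> nat) \<Rightarrow> 'f option \<Rightarrow> nat" where
  "arS ar g = (case g of None \<Rightarrow> 1 | Some f \<Rightarrow> ar f)"

definition aop :: "('f option, 'v) trm \<Rightarrow> ('f option, 'v) trm" where
  "aop t = Op None [t]"

definition eqS :: "'f set \<Rightarrow> ('f \<Rightarrow> nat) \<Rightarrow> (('f, nat) trm \<times> ('f, nat) trm) set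
                   \<Rightarrow> (('f option, nat) trm \<times> ('f option, nat) trm) set" where
  "eqS Sig ar E =
     {(aop (aop (Var 0)), aop (Var 0))}
   \<union> {(aop (Op (Some f) (map Var [0..<ar f])), Op (Some f) (map Var [0..<ar f])) | f. f \<in> Sig}
   \<union> {(Op (Some f) (map (\<lambda>i. aop (Var i)) [0..<ar f]), Op (Some f) (map Var [0..<ar f])) | f. f \<in> Sig}
   \<union> {(subst (\<lambda>i. aop (Var i)) (map_trm Some id l), subst (\<lambda>i. aop (Var i)) (map_trm Some id r))
        | l r. (l, r) \<in> E}"

primrec strip :: "('f option, 'v) trm \<Rightarrow> ('f, 'v) trm" where
  "strip (Var x) = Var x"
| "strip (Op g ts) = (case g of
      None \<Rightarrow> (case map strip ts of [u] \<Rightarrow> u | _ \<Rightarrow> undefined)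
    | Some f \<Rightarrow> Op f (map strip ts))"

definition phi :: "'f set \<Rightarrow> ('f \<Rightarrow> nat) \<Rightarrow> (('f, nat) trm \<times> ('f, nat) trm) set \<Rightarrow> 'v set
                   \<Rightarrow> ('f option, 'v) trm set \<Rightarrow> 'v + ('f, 'v) trm set" where
  "phi Sig ar E V C = (let t = (SOME t. t \<in> C) in
      (case t of Var x \<Rightarrow> Inl x | Op _ _ \<Rightarrow> Inr (cls Sig ar E V (strip t))))"

end

theory Submission
  imports Defs
begin


lemma subst_terms:
  "t \<in> terms S a U \<Longrightarrow> (\<forall>x\<in>U. \<sigma> x \<in> terms S a V) \<Longrightarrow> subst \<sigma> t \<in> terms S a V"
  by (induction t rule: terms.induct) (auto intro!: terms.intros)

lemma subst_subst: "subst \<sigma> (subst \<tau> t) = subst (\<lambda>x. subst \<sigma> (\<tau> x)) t"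
  by (induction t) auto

lemma subst_Var: "subst Var t = t"
  by (induction t) (auto intro: map_idI)

lemma map_subst: "map_trm id f t = subst (\<lambda>x. Var (f x)) t"
  by (induction t) auto

lemma eqv_terms:
  assumes "eqv S a Eq V s t" "is_theory S a Eq"
  shows "s \<in> terms S a V \<and> t \<in> terms S a V"
  using assms
proof (induction rule: eqv.induct)
  case (cong f ts us)
  then show ?case
    by (auto simp: list_all2_conv_all_nth in_set_conv_nth intro!: terms.op)
next
  case (ax l r \<sigma>)
  then show ?case unfolding is_theory_def by (auto intro!: subst_terms)
qed auto

lemma eqv_subst:
  assumes "eqv S a Eq U s t" "\<forall>x\<in>U. \<sigma> x \<in> terms S a V"
  shows "eqv S a Eq V (subst \<sigma> s) (subst \<sigma> t)"
  using assms
proof (induction rule: eqv.induct)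
  case (refl t)
  then show ?case by (auto intro!: eqv.refl subst_terms)
next
  case (sym s t)
  then show ?case by (auto intro: eqv.sym)
next
  case (trans s t u)
  then show ?case by (auto intro: eqv.trans)
next
  case (cong f ts us)
  then show ?case
    by (auto simp: list_all2_conv_all_nth intro!: eqv.cong)
next
  case (ax l r \<tau>)
  have "eqv S a Eq V (subst (\<lambda>x. subst \<sigma> (\<tau> x)) l) (subst (\<lambda>x. subst \<sigma> (\<tau> x)) r)"
    using ax by (auto intro!: eqv.ax subst_terms)
  then show ?case by (simp add: subst_subst)
qed

lemma eqv_subst_cong:
  assumes "t \<in> terms S a U" "\<forall>x\<in>U. eqv S a Eq V (\<sigma> x) (\<sigma>' x)"
  shows "eqv S a Eq V (subst \<sigma> t) (subst \<sigma>' t)"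
  using assms
  by (induction t rule: terms.induct) (auto simp: list_all2_conv_all_nth intro!: eqv.cong)

lemma cls_eq: "eqv S a Eq V s t \<Longrightarrow> cls S a Eq V s = cls S a Eq V t"
  unfolding cls_def by (auto intro: eqv.trans eqv.sym)

lemma in_cls: "t \<in> terms S a V \<Longrightarrow> t \<in> cls S a Eq V t"
  unfolding cls_def by (auto intro: eqv.refl)

lemma cls_eq_iff: "t \<in> terms S a V \<Longrightarrow> cls S a Eq V s = cls S a Eq V t \<longleftrightarrow> eqv S a Eq V s t"
  unfolding cls_def by (auto intro: eqv.refl eqv.trans eqv.sym)

lemma Tmap_cls:
  assumes "t \<in> terms S a V" "\<forall>x\<in>V. f x \<in> W"
  shows "Tmap S a Eq W f (cls S a Eq V t) = cls S a Eq W (map_trm id f t)"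
proof -
  have st: "\<forall>x\<in>V. Var (f x) \<in> terms S a W" using assms(2) by (auto intro: terms.var)
  show ?thesis
    unfolding Tmap_def
  proof (intro set_eqI iffI)
    fix s assume "s \<in> {s. \<exists>t\<in>cls S a Eq V t. eqv S a Eq W (map_trm id f t) s}"
    then obtain t' where "eqv S a Eq V t t'" "eqv S a Eq W (map_trm id f t') s"
      unfolding cls_def by auto
    then show "s \<in> cls S a Eq W (map_trm id f t)"
      unfolding cls_def using eqv_subst[OF _ st] by (auto simp: map_subst intro: eqv.trans)
  next
    fix s assume "s \<in> cls S a Eq W (map_trm id f t)"
    then show "s \<in> {s. \<exists>t\<in>cls S a Eq V t. eqv S a Eq W (map_trm id f t) s}"
      using in_cls[OF assms(1)] unfolding cls_def by auto
  qed
qed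

lemma Tc_cls_some:
  assumes "c \<in> Tc S a Eq V"
  shows "(SOME s. s \<in> c) \<in> c"
  using assms unfolding Tc_def by (auto intro: someI in_cls)

lemma Tmult_cls:
  assumes "t \<in> terms S a (Tc S a Eq V)" "is_theory S a Eq"
  shows "Tmult S a Eq V (cls S a Eq (Tc S a Eq V) t) = cls S a Eq V (subst (\<lambda>c. SOME s. s \<in> c) t)"
proof -
  let ?s0 = "\<lambda>c. SOME s. s \<in> c"
  have s0: "\<forall>c\<in>Tc S a Eq V. ?s0 c \<in> c" using Tc_cls_some by blast
  have eqc: "eqv S a Eq V (\<sigma> c) (?s0 c)" if h1: "\<forall>c\<in>Tc S a Eq V. \<sigma> c \<in> c" and h2: "c \<in> Tc S a Eq V" for \<sigma> c
  proof -
    obtain u where "c = cls S a Eq V u" using h2 unfolding Tc_def by auto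
    moreover have "\<sigma> c \<in> c" "?s0 c \<in> c" using h1 h2 s0 by auto
    ultimately show ?thesis unfolding cls_def by (metis eqv.sym eqv.trans mem_Collect_eq)
  qed
  have wt: "\<forall>c\<in>Tc S a Eq V. \<sigma> c \<in> terms S a V" if "\<forall>c\<in>Tc S a Eq V. \<sigma> c \<in> c" for \<sigma>
  proof
    note h = that
    fix c assume "c \<in> Tc S a Eq V"
    then obtain u where "c = cls S a Eq V u" unfolding Tc_def by auto
    moreover have "\<sigma> c \<in> c" using h \<open>c \<in> _\<close> by blast
    ultimately have "eqv S a Eq V u (\<sigma> c)" unfolding cls_def by simp
    then show "\<sigma> c \<in> terms S a V" using eqv_terms[OF _ assms(2)] by blast
  qed
  show ?thesis
    unfolding Tmult_def
  proof (intro set_eqI iffI)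
    fix s assume "s \<in> {s. \<exists>t\<in>cls S a Eq (Tc S a Eq V) t. \<exists>\<sigma>. (\<forall>c\<in>Tc S a Eq V. \<sigma> c \<in> c) \<and> eqv S a Eq V (subst \<sigma> t) s}"
    then obtain t' \<sigma> where t': "eqv S a Eq (Tc S a Eq V) t t'" and sg: "\<forall>c\<in>Tc S a Eq V. \<sigma> c \<in> c"
      and e: "eqv S a Eq V (subst \<sigma> t') s" unfolding cls_def by auto
    have "eqv S a Eq V (subst \<sigma> t) (subst \<sigma> t')" using eqv_subst[OF t' wt[OF sg]] .
    moreover have "eqv S a Eq V (subst ?s0 t) (subst \<sigma> t)"
      using eqv_subst_cong[OF assms(1)] eqc[OF sg] eqv.sym by metis
    ultimately show "s \<in> cls S a Eq V (subst ?s0 t)" using e unfolding cls_def by (metis eqv.trans mem_Collect_eq)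
  next
    fix s assume "s \<in> cls S a Eq V (subst ?s0 t)"
    then show "s \<in> {s. \<exists>t\<in>cls S a Eq (Tc S a Eq V) t. \<exists>\<sigma>. (\<forall>c\<in>Tc S a Eq V. \<sigma> c \<in> c) \<and> eqv S a Eq V (subst \<sigma> t) s}"
    proof (intro CollectI bexI exI conjI)
      show "t \<in> cls S a Eq (Tc S a Eq V) t" using in_cls[OF assms(1)] .
      show "\<forall>c\<in>Tc S a Eq V. ?s0 c \<in> c" using s0 .
      show "eqv S a Eq V (subst ?s0 t) s" using \<open>s \<in> _\<close> unfolding cls_def by simp
    qed
  qed
qed

lemma eqv_var:
  assumes "eqv S a Eq V s t" "\<forall>(l,r)\<in>Eq. (\<forall>x. l \<noteq> Var x) \<and> (\<forall>x. r \<noteq> Var x)"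
  shows "s = Var x \<longleftrightarrow> t = Var x"
  using assms
proof (induction rule: eqv.induct)
  case (ax l r \<sigma>)
  then show ?case by (cases l; cases r) (auto split: prod.splits)
qed auto



definition atl :: "('f, 'v) trm \<Rightarrow> ('f option, 'v) trm" where
  "atl u = subst (\<lambda>i. aop (Var i)) (map_trm Some id u)"

lemma atl_simps[simp]: "atl (Var x) = aop (Var x)" "atl (Op f us) = Op (Some f) (map atl us)"
  by (simp_all add: atl_def)

lemma lift_terms: "l \<in> terms Sig ar V \<Longrightarrow> map_trm Some id l \<in> terms (sigS Sig) (arS ar) V"
  by (induction l rule: terms.induct) (auto intro!: terms.intros simp: sigS_def arS_def)

lemma aop_terms: "t \<in> terms (sigS Sig) (arS ar) V \<Longrightarrow> aop t \<in> terms (sigS Sig) (arS ar) V"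
  unfolding aop_def by (auto intro!: terms.intros simp: sigS_def arS_def)

lemma atl_terms: "u \<in> terms Sig ar V \<Longrightarrow> atl u \<in> terms (sigS Sig) (arS ar) V"
  unfolding atl_def by (auto intro!: subst_terms lift_terms aop_terms terms.var)

lemma atl_nonvar: "atl u \<noteq> Var x"
  by (cases u) (auto simp: aop_def)

lemma None_terms: "Op None ts \<in> terms (sigS Sig) (arS ar) V \<Longrightarrow> \<exists>u. ts = [u] \<and> u \<in> terms (sigS Sig) (arS ar) V"
  by (erule terms.cases) (auto simp: arS_def length_Suc_conv)

lemma strip_terms: "t \<in> terms (sigS Sig) (arS ar) V \<Longrightarrow> strip t \<in> terms Sig ar V"
proof (induction t rule: terms.induct)
  case (var x) then show ?case by (auto intro: terms.var)
next
  case (op f ts)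
  then show ?case
    by (cases f) (auto simp: sigS_def arS_def length_Suc_conv intro!: terms.op)
qed

lemma strip_subst: "t \<in> terms (sigS Sig) (arS ar) U \<Longrightarrow> strip (subst \<sigma> t) = subst (\<lambda>x. strip (\<sigma> x)) (strip t)"
proof (induction t rule: terms.induct)
  case (op f ts)
  then show ?case
    by (cases f) (auto simp: sigS_def arS_def length_Suc_conv)
qed simp

lemma strip_lift: "strip (map_trm Some id l) = l"
  by (induction l) (auto intro: map_idI)

lemma strip_atl: "u \<in> terms Sig ar V \<Longrightarrow> strip (atl u) = u"
proof -
  assume u: "u \<in> terms Sig ar V"
  have "strip (atl u) = subst (\<lambda>x. strip (aop (Var x))) (strip (map_trm Some id u))"
    unfolding atl_def using strip_subst[OF lift_terms[OF u]] .
  also have "\<dots> = u" by (simp add: aop_def strip_lift subst_Var)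
  finally show ?thesis .
qed

lemma map_nth_upt: "(\<forall>i<length ts. \<sigma> i = ts ! i) \<Longrightarrow> map \<sigma> [0..<length ts] = ts"
  by (rule nth_equalityI) auto

context
  fixes Sig :: "'f set" and ar :: "'f \<Rightarrow> nat" and E :: "(('f, nat) trm \<times> ('f, nat) trm) set"
  assumes th: "is_theory Sig ar E"
begin

lemma thS: "is_theory (sigS Sig) (arS ar) (eqS Sig ar E)"
proof -
  have v: "Var i \<in> terms (sigS Sig) (arS ar) UNIV" for i by (rule terms.var) simp
  have s: "Some f \<in> sigS Sig" "arS ar (Some f) = ar f" if "f \<in> Sig" for f
    using that by (auto simp: sigS_def arS_def)
  have o1: "Op (Some f) (map Var [0..<ar f]) \<in> terms (sigS Sig) (arS ar) UNIV" if "f \<in> Sig" for f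
    using s[OF that] by (auto intro!: terms.op v)
  have o2: "Op (Some f) (map (\<lambda>i. aop (Var i)) [0..<ar f]) \<in> terms (sigS Sig) (arS ar) UNIV" if "f \<in> Sig" for f
    using s[OF that] by (auto intro!: terms.op v aop_terms)
  show ?thesis
    using th unfolding is_theory_def eqS_def
    by (auto intro!: aop_terms v o1 o2 atl_terms[unfolded atl_def])
qed

lemma eqS_nonvar: "\<forall>(l,r)\<in>eqS Sig ar E. (\<forall>x. l \<noteq> Var x) \<and> (\<forall>x. r \<noteq> Var x)"
proof -
  have n: "subst (\<lambda>i. Op None [Var i]) (map_trm Some id u) \<noteq> Var x" for u :: "('f, nat) trm" and x
    by (cases u) auto
  show ?thesis unfolding eqS_def by (auto simp: aop_def n)
qed

lemma eqv_strip:
  "eqv (sigS Sig) (arS ar) (eqS Sig ar E) V s t \<Longrightarrow> eqv Sig ar E V (strip s) (strip t)"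
proof (induction rule: eqv.induct)
  case (refl t)
  then show ?case by (auto intro: eqv.refl strip_terms)
next
  case (sym s t)
  then show ?case by (auto intro: eqv.sym)
next
  case (trans s t u)
  then show ?case by (auto intro: eqv.trans)
next
  case (cong g ts us)
  show ?case
  proof (cases g)
    case None
    then obtain t1 u1 where "ts = [t1]" "us = [u1]" "eqv Sig ar E V (strip t1) (strip u1)"
      using cong by (auto simp: arS_def length_Suc_conv list_all2_Cons1)
    then show ?thesis using None by simp
  next
    case (Some f)
    then show ?thesis using cong
      by (auto simp: sigS_def arS_def list_all2_conv_all_nth intro!: eqv.cong)
  qed
next
  case (ax l r \<sigma>)
  have wr: "subst \<sigma> r \<in> terms (sigS Sig) (arS ar) V"
    using ax thS unfolding is_theory_def by (auto intro!: subst_terms)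
  have triv: "eqv Sig ar E V (strip (subst \<sigma> l)) (strip (subst \<sigma> r))"
    if "strip (subst \<sigma> l) = strip (subst \<sigma> r)"
    using that eqv.refl[OF strip_terms[OF wr]] by simp
  have st: "\<forall>i. strip (\<sigma> i) \<in> terms Sig ar V" using ax strip_terms by blast
  from ax(1) consider "l = aop (aop (Var 0))" "r = aop (Var 0)"
    | f where "f \<in> Sig" "l = aop (Op (Some f) (map Var [0..<ar f]))" "r = Op (Some f) (map Var [0..<ar f])"
    | f where "f \<in> Sig" "l = Op (Some f) (map (\<lambda>i. aop (Var i)) [0..<ar f])" "r = Op (Some f) (map Var [0..<ar f])"
    | l0 r0 where "(l0, r0) \<in> E" "l = atl l0" "r = atl r0"
    unfolding eqS_def atl_def by blast
  then show ?case
  proof cases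
    case 1 then show ?thesis by (intro triv) (simp add: aop_def)
  next
    case 2 then show ?thesis by (intro triv) (simp add: aop_def)
  next
    case 3 then show ?thesis by (intro triv) (simp add: aop_def)
  next
    case 4
    have lr: "l0 \<in> terms Sig ar UNIV" "r0 \<in> terms Sig ar UNIV" using 4(1) th unfolding is_theory_def by auto
    have "strip (subst \<sigma> (atl u)) = subst (\<lambda>x. strip (\<sigma> x)) u" if "u \<in> terms Sig ar UNIV" for u
      using strip_subst[OF atl_terms[OF that]] strip_atl[OF that] by simp
    then show ?thesis using 4 lr eqv.ax[OF 4(1) st] by simp
  qed
qed

abbreviation "SS \<equiv> sigS Sig"
abbreviation "AS \<equiv> arS ar"
abbreviation "ES \<equiv> eqS Sig ar E"

lemma axiom1: "t \<in> terms SS AS V \<Longrightarrow> eqv SS AS ES V (aop (aop t)) (aop t)"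
proof -
  assume t: "t \<in> terms SS AS V"
  have "(aop (aop (Var 0)), aop (Var 0)) \<in> ES" unfolding eqS_def by blast
  from eqv.ax[OF this, of "\<lambda>_. t"] t show ?thesis by (simp add: aop_def)
qed

lemma axiom2:
  assumes "f \<in> Sig" "length ts = ar f" "\<forall>t\<in>set ts. t \<in> terms SS AS V"
  shows "eqv SS AS ES V (aop (Op (Some f) ts)) (Op (Some f) ts)"
proof -
  have d: "Op (Some f) ts \<in> terms SS AS V" using assms by (auto intro!: terms.op simp: sigS_def arS_def)
  let ?\<sigma> = "\<lambda>i. if i < length ts then ts ! i else Op (Some f) ts"
  have s: "\<forall>i. ?\<sigma> i \<in> terms SS AS V" using assms d by auto
  have m: "map ?\<sigma> [0..<ar f] = ts" using assms(2) map_nth_upt[of ts ?\<sigma>] by simp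
  have "(aop (Op (Some f) (map Var [0..<ar f])), Op (Some f) (map Var [0..<ar f])) \<in> ES"
    unfolding eqS_def using assms(1) by blast
  from eqv.ax[OF this s] m show ?thesis by (simp add: aop_def comp_def)
qed

lemma axiom3:
  assumes "f \<in> Sig" "length ts = ar f" "\<forall>t\<in>set ts. t \<in> terms SS AS V"
  shows "eqv SS AS ES V (Op (Some f) (map aop ts)) (Op (Some f) ts)"
proof -
  have d: "Op (Some f) ts \<in> terms SS AS V" using assms by (auto intro!: terms.op simp: sigS_def arS_def)
  let ?\<sigma> = "\<lambda>i. if i < length ts then ts ! i else Op (Some f) ts"
  have s: "\<forall>i. ?\<sigma> i \<in> terms SS AS V" using assms d by auto
  have m: "map ?\<sigma> [0..<ar f] = ts" using assms(2) map_nth_upt[of ts ?\<sigma>] by simp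
  have m2: "map (\<lambda>i. aop (?\<sigma> i)) [0..<ar f] = map aop ts"
    using arg_cong[OF m, of "map aop"] by (simp add: comp_def)
  have "(Op (Some f) (map (\<lambda>i. aop (Var i)) [0..<ar f]), Op (Some f) (map Var [0..<ar f])) \<in> ES"
    unfolding eqS_def using assms(1) by blast
  from eqv.ax[OF this s] m m2 show ?thesis by (simp add: aop_def comp_def)
qed

lemma aop_atl: "u \<in> terms Sig ar V \<Longrightarrow> eqv SS AS ES V (aop (atl u)) (atl u)"
proof (erule terms.cases)
  fix x assume "u = Var x" "x \<in> V"
  then show ?thesis using axiom1[of "Var x"] by (auto intro: terms.var)
next
  fix f ts assume "u = Op f ts" "f \<in> Sig" "length ts = ar f" "\<forall>t\<in>set ts. t \<in> terms Sig ar V"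
  then show ?thesis using axiom2[of f "map atl ts"] by (auto intro: atl_terms)
qed

lemma atl_subst: "atl (subst \<sigma> t) = subst (\<lambda>x. atl (\<sigma> x)) (map_trm Some id t)"
  by (induction t) auto

lemma atl_eqv: "eqv Sig ar E V u u' \<Longrightarrow> eqv SS AS ES V (atl u) (atl u')"
proof (induction rule: eqv.induct)
  case (refl t)
  then show ?case by (auto intro: eqv.refl atl_terms)
next
  case (sym s t)
  then show ?case by (auto intro: eqv.sym)
next
  case (trans s t u)
  then show ?case by (auto intro: eqv.trans)
next
  case (cong f ts us)
  then show ?case
    by (auto simp: sigS_def arS_def list_all2_conv_all_nth intro!: eqv.cong)
next
  case (ax l r \<sigma>)
  let ?s = "\<lambda>i. atl (\<sigma> i)"
  have lr: "l \<in> terms Sig ar UNIV" "r \<in> terms Sig ar UNIV" using ax(1) th unfolding is_theory_def by auto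
  have A: "eqv SS AS ES V (subst ?s (map_trm Some id u)) (subst ?s (atl u))"
    if "u \<in> terms Sig ar UNIV" for u
  proof -
    have "eqv SS AS ES V (subst ?s (map_trm Some id u)) (subst (\<lambda>i. aop (?s i)) (map_trm Some id u))"
      using eqv_subst_cong[OF lift_terms[OF that]] aop_atl ax(2) eqv.sym by metis
    moreover have "subst (\<lambda>i. aop (?s i)) (map_trm Some id u) = subst ?s (atl u)"
      unfolding atl_def subst_subst by (simp add: aop_def)
    ultimately show ?thesis by simp
  qed
  have "(atl l, atl r) \<in> ES" using ax(1) unfolding eqS_def atl_def by blast
  moreover have "\<forall>i. atl (\<sigma> i) \<in> terms SS AS V" using ax(2) by (simp add: atl_terms)
  ultimately have B: "eqv SS AS ES V (subst ?s (atl l)) (subst ?s (atl r))"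
    by (rule eqv.ax)
  show ?case unfolding atl_subst
    using A[OF lr(1)] A[OF lr(2)] B by (meson eqv.sym eqv.trans)
qed

lemma aop_strip: "t \<in> terms SS AS V \<Longrightarrow> eqv SS AS ES V (aop t) (atl (strip t))"
proof (induction t rule: terms.induct)
  case (var x)
  then show ?case by (auto intro!: eqv.refl aop_terms terms.var)
next
  case (op g ts)
  show ?case
  proof (cases g)
    case None
    then obtain u where u: "ts = [u]" "u \<in> terms SS AS V" "eqv SS AS ES V (aop u) (atl (strip u))"
      using op by (auto simp: arS_def length_Suc_conv)
    then show ?thesis using None axiom1[OF u(2)] by (auto simp: aop_def intro: eqv.trans)
  next
    case (Some f)
    then have f: "f \<in> Sig" "length ts = ar f" using op by (auto simp: sigS_def arS_def)
    have ts: "\<forall>t\<in>set ts. t \<in> terms SS AS V" using op by auto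
    have sf: "Some f \<in> SS" "AS (Some f) = ar f" by (simp_all add: sigS_def arS_def f)
    have l2: "list_all2 (eqv SS AS ES V) (map aop ts) (map (\<lambda>t. atl (strip t)) ts)"
      using op.IH by (auto simp: list_all2_conv_all_nth)
    have c: "eqv SS AS ES V (Op (Some f) (map aop ts)) (Op (Some f) (map (\<lambda>t. atl (strip t)) ts))"
      using eqv.cong[OF sf(1) _ l2] sf(2) f(2) by simp
    show ?thesis using Some eqv.trans[OF axiom2[OF f ts] eqv.trans[OF eqv.sym[OF axiom3[OF f ts]] c]]
      by (simp add: comp_def)
  qed
qed

lemma nonvar_aop: "t \<in> terms SS AS V \<Longrightarrow> (\<forall>x. t \<noteq> Var x) \<Longrightarrow> eqv SS AS ES V t (aop t)"
proof (erule terms.cases)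
  fix g ts assume h: "t = Op g ts" "g \<in> SS" "length ts = AS g" "\<forall>t\<in>set ts. t \<in> terms SS AS V"
  show ?thesis
  proof (cases g)
    case None
    then obtain u where "ts = [u]" "u \<in> terms SS AS V" using h by (auto simp: arS_def length_Suc_conv)
    then show ?thesis using h None axiom1 eqv.sym by (fastforce simp: aop_def)
  next
    case (Some f)
    then show ?thesis using h axiom2[of f ts V] eqv.sym by (auto simp: sigS_def arS_def)
  qed
qed auto

lemma nonvar_atl: "t \<in> terms SS AS V \<Longrightarrow> (\<forall>x. t \<noteq> Var x) \<Longrightarrow> eqv SS AS ES V t (atl (strip t))"
  using nonvar_aop aop_strip eqv.trans by blast

lemma var_terms: "Var x \<in> terms S a V \<Longrightarrow> x \<in> V"
  by (erule terms.cases) auto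

lemma phi_cls_gen:
  assumes t: "t \<in> terms SS AS V"
  shows "phi Sig ar E V (cls SS AS ES V t) = (case t of Var x \<Rightarrow> Inl x | Op g ts \<Rightarrow> Inr (cls Sig ar E V (strip t)))"
proof -
  define t' where "t' = (SOME t'. t' \<in> cls SS AS ES V t)"
  have "t' \<in> cls SS AS ES V t" unfolding t'_def by (rule someI, rule in_cls[OF t])
  then have e: "eqv SS AS ES V t t'" unfolding cls_def by simp
  have var: "t = Var x \<longleftrightarrow> t' = Var x" for x using eqv_var[OF e eqS_nonvar] .
  have ph: "phi Sig ar E V (cls SS AS ES V t) = (case t' of Var x \<Rightarrow> Inl x | Op _ _ \<Rightarrow> Inr (cls Sig ar E V (strip t')))"
    unfolding phi_def Let_def t'_def ..
  show ?thesis
  proof (cases t)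
    case (Var x)
    then show ?thesis using ph var[of x] by simp
  next
    case (Op g ts)
    then obtain g' ts' where t'o: "t' = Op g' ts'" using var by (cases t') auto
    have "cls Sig ar E V (strip t') = cls Sig ar E V (strip t)"
      using cls_eq[OF eqv.sym[OF eqv_strip[OF e]]] .
    then show ?thesis using ph Op t'o by simp
  qed
qed

lemma phi_var: "x \<in> V \<Longrightarrow> phi Sig ar E V (cls SS AS ES V (Var x)) = Inl x"
  using phi_cls_gen[of "Var x" V] by (simp add: terms.var)

lemma phi_nonvar: "t \<in> terms SS AS V \<Longrightarrow> (\<forall>x. t \<noteq> Var x) \<Longrightarrow>
    phi Sig ar E V (cls SS AS ES V t) = Inr (cls Sig ar E V (strip t))"
  using phi_cls_gen[of t V] by (cases t) auto

lemma phi_in: "C \<in> Tc SS AS ES V \<Longrightarrow> phi Sig ar E V C \<in> SFc Sig ar E V"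
proof -
  assume "C \<in> Tc SS AS ES V"
  then obtain t where t: "t \<in> terms SS AS V" "C = cls SS AS ES V t" unfolding Tc_def by auto
  show ?thesis
  proof (cases t)
    case (Var x)
    then have "x \<in> V" using t(1) var_terms by metis
    then show ?thesis using t Var phi_var[of x V] unfolding SFc_def by auto
  next
    case (Op g ts)
    then have "phi Sig ar E V C = Inr (cls Sig ar E V (strip t))" using phi_nonvar[OF t(1)] t(2) by simp
    moreover have "cls Sig ar E V (strip t) \<in> Tc Sig ar E V"
      using strip_terms[OF t(1)] unfolding Tc_def by (rule imageI)
    ultimately show ?thesis unfolding SFc_def by simp
  qed
qed

lemma phi_cases:
  assumes "t \<in> terms SS AS V"
  shows "(\<exists>x. x \<in> V \<and> t = Var x \<and> phi Sig ar E V (cls SS AS ES V t) = Inl x)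
       \<or> ((\<forall>x. t \<noteq> Var x) \<and> phi Sig ar E V (cls SS AS ES V t) = Inr (cls Sig ar E V (strip t)))"
proof (cases t)
  case (Var x)
  then have "x \<in> V" using assms var_terms by metis
  then show ?thesis using Var phi_var[of x V] by simp
next
  case (Op g ts)
  then show ?thesis using phi_nonvar[OF assms] by simp
qed

lemma phi_inj: "inj_on (phi Sig ar E V) (Tc SS AS ES V)"
proof (rule inj_onI)
  fix C1 C2 assume C: "C1 \<in> Tc SS AS ES V" "C2 \<in> Tc SS AS ES V" "phi Sig ar E V C1 = phi Sig ar E V C2"
  obtain t1 where t1: "t1 \<in> terms SS AS V" "C1 = cls SS AS ES V t1" using C(1) unfolding Tc_def by auto
  obtain t2 where t2: "t2 \<in> terms SS AS V" "C2 = cls SS AS ES V t2" using C(2) unfolding Tc_def by auto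
  note c1 = phi_cases[OF t1(1)] and c2 = phi_cases[OF t2(1)]
  have p: "phi Sig ar E V (cls SS AS ES V t1) = phi Sig ar E V (cls SS AS ES V t2)"
    using C(3) t1(2) t2(2) by simp
  show "C1 = C2"
  proof (cases "\<exists>x. t1 = Var x")
    case True
    then obtain x where x: "t1 = Var x" "phi Sig ar E V (cls SS AS ES V t1) = Inl x" using c1 by auto
    then obtain y where y: "t2 = Var y" "phi Sig ar E V (cls SS AS ES V t2) = Inl y" using c2 p by auto
    then show ?thesis using x p t1(2) t2(2) by simp
  next
    case False
    then have x: "phi Sig ar E V (cls SS AS ES V t1) = Inr (cls Sig ar E V (strip t1))" using c1 by auto
    then have y: "\<forall>x. t2 \<noteq> Var x" "phi Sig ar E V (cls SS AS ES V t2) = Inr (cls Sig ar E V (strip t2))"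
      using c2 p by auto
    then have "cls Sig ar E V (strip t1) = cls Sig ar E V (strip t2)" using x p by simp
    then have "eqv Sig ar E V (strip t1) (strip t2)"
      using cls_eq_iff[OF strip_terms[OF t2(1)]] by blast
    then have a: "eqv SS AS ES V (atl (strip t1)) (atl (strip t2))" by (rule atl_eqv)
    have b1: "eqv SS AS ES V t1 (atl (strip t1))" using nonvar_atl[OF t1(1)] False by blast
    have b2: "eqv SS AS ES V t2 (atl (strip t2))" using nonvar_atl[OF t2(1) y(1)] .
    have "eqv SS AS ES V t1 t2" using eqv.trans[OF eqv.trans[OF b1 a] eqv.sym[OF b2]] .
    then show ?thesis using t1(2) t2(2) cls_eq by metis
  qed
qed

lemma phi_surj: "SFc Sig ar E V \<subseteq> phi Sig ar E V ` Tc SS AS ES V"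
proof
  fix y assume "y \<in> SFc Sig ar E V"
  then consider x where "x \<in> V" "y = Inl x" | u where "u \<in> terms Sig ar V" "y = Inr (cls Sig ar E V u)"
    unfolding SFc_def Tc_def by auto
  then show "y \<in> phi Sig ar E V ` Tc SS AS ES V"
  proof cases
    case (1 x)
    then show ?thesis using phi_var[of x V] unfolding Tc_def by (auto intro!: image_eqI terms.var)
  next
    case (2 u)
    have nv: "\<forall>x. atl u \<noteq> Var x" by (simp add: atl_nonvar)
    have "phi Sig ar E V (cls SS AS ES V (atl (u))) = y"
      using phi_nonvar[OF atl_terms[OF 2(1)] nv] strip_atl[OF 2(1)] 2(2) by simp
    moreover have "cls SS AS ES V (atl u) \<in> Tc SS AS ES V"
      unfolding Tc_def using atl_terms[OF 2(1)] by (rule imageI)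
    ultimately show ?thesis by (rule image_eqI[OF HOL.sym])
  qed
qed

lemma part1: "bij_betw (phi Sig ar E V) (Tc SS AS ES V) (SFc Sig ar E V)"
  unfolding bij_betw_def using phi_inj phi_in phi_surj by blast

lemma strip_map: "t \<in> terms SS AS U \<Longrightarrow> strip (map_trm id f t) = map_trm id f (strip t)"
  unfolding map_subst by (simp add: strip_subst)

lemma part2:
  assumes f: "\<forall>x\<in>V. f x \<in> W" and C: "C \<in> Tc SS AS ES V"
  shows "phi Sig ar E W (Tmap SS AS ES W f C) = SFmap Sig ar E W f (phi Sig ar E V C)"
proof -
  obtain t where t: "t \<in> terms SS AS V" "C = cls SS AS ES V t" using C unfolding Tc_def by auto
  have tm: "Tmap SS AS ES W f C = cls SS AS ES W (map_trm id f t)" using Tmap_cls[OF t(1) f] t(2) by simp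
  have mt: "map_trm id f t \<in> terms SS AS W"
    unfolding map_subst using t(1) f by (auto intro!: subst_terms terms.var)
  from phi_cases[OF t(1)] show ?thesis
  proof
    assume "\<exists>x. x \<in> V \<and> t = Var x \<and> phi Sig ar E V (cls SS AS ES V t) = Inl x"
    then obtain x where x: "x \<in> V" "t = Var x" "phi Sig ar E V (cls SS AS ES V t) = Inl x" by blast
    have fx: "f x \<in> W" using f x(1) by blast
    have "phi Sig ar E W (Tmap SS AS ES W f C) = phi Sig ar E W (cls SS AS ES W (Var (f x)))"
      using tm x(2) by simp
    also have "\<dots> = Inl (f x)" using phi_var[OF fx] .
    also have "\<dots> = SFmap Sig ar E W f (Inl x)" by (simp add: SFmap_def)
    also have "Inl x = phi Sig ar E V C" using x(3) t(2) by simp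
    finally show ?thesis .
  next
    assume a: "(\<forall>x. t \<noteq> Var x) \<and> phi Sig ar E V (cls SS AS ES V t) = Inr (cls Sig ar E V (strip t))"
    have nv: "\<forall>x. map_trm id f t \<noteq> Var x" using a by (cases t) auto
    have "phi Sig ar E W (Tmap SS AS ES W f C) = phi Sig ar E W (cls SS AS ES W (map_trm id f t))"
      using tm by simp
    also have "\<dots> = Inr (cls Sig ar E W (strip (map_trm id f t)))" using phi_nonvar[OF mt nv] .
    also have "strip (map_trm id f t) = map_trm id f (strip t)" using strip_map[OF t(1), of f] .
    also have "cls Sig ar E W (map_trm id f (strip t)) = Tmap Sig ar E W f (cls Sig ar E V (strip t))"
      using Tmap_cls[OF strip_terms[OF t(1)] f] by simp
    also have "Inr (Tmap Sig ar E W f (cls Sig ar E V (strip t))) = SFmap Sig ar E W f (Inr (cls Sig ar E V (strip t)))"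
      by (simp add: SFmap_def)
    also have "Inr (cls Sig ar E V (strip t)) = phi Sig ar E V C" using a t(2) by simp
    finally show ?thesis .
  qed
qed

lemma part3: "x \<in> V \<Longrightarrow> phi Sig ar E V (Tunit SS AS ES V x) = SFunit x"
  unfolding Tunit_def SFunit_def by (rule phi_var)

lemma s0_terms: "c \<in> Tc S a Eq V \<Longrightarrow> is_theory S a Eq \<Longrightarrow> (SOME s. s \<in> c) \<in> terms S a V"
proof -
  assume c: "c \<in> Tc S a Eq V" and th': "is_theory S a Eq"
  then obtain u where u: "c = cls S a Eq V u" unfolding Tc_def by auto
  have "(SOME s. s \<in> c) \<in> c" using Tc_cls_some[OF c] .
  then have "eqv S a Eq V u (SOME s. s \<in> c)" using u unfolding cls_def by simp
  then show ?thesis using eqv_terms[OF _ th'] by blast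
qed

lemma pw:
  assumes c: "c \<in> Tc SS AS ES V"
  shows "eqv Sig ar E V (strip (SOME s. s \<in> c))
           (SOME s. s \<in> case_sum (Tunit Sig ar E V) id (phi Sig ar E V c))"
proof -
  obtain u where u: "u \<in> terms SS AS V" "c = cls SS AS ES V u" using c unfolding Tc_def by auto
  have "(SOME s. s \<in> c) \<in> c" using Tc_cls_some[OF c] .
  then have e: "eqv SS AS ES V u (SOME s. s \<in> c)" using u unfolding cls_def by simp
  from phi_cases[OF u(1)] show ?thesis
  proof
    assume "\<exists>x. x \<in> V \<and> u = Var x \<and> phi Sig ar E V (cls SS AS ES V u) = Inl x"
    then obtain x where x: "x \<in> V" "u = Var x" "phi Sig ar E V (cls SS AS ES V u) = Inl x" by blast
    have sx: "(SOME s. s \<in> c) = Var x" using eqv_var[OF e eqS_nonvar, of x] x(2) by simp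
    have xt: "Var x \<in> terms Sig ar V" using x(1) by (rule terms.var)
    have "(SOME s. s \<in> cls Sig ar E V (Var x)) \<in> cls Sig ar E V (Var x)"
      by (rule someI, rule in_cls[OF xt])
    then show ?thesis using x u(2) sx unfolding Tunit_def cls_def by simp
  next
    assume a: "(\<forall>x. u \<noteq> Var x) \<and> phi Sig ar E V (cls SS AS ES V u) = Inr (cls Sig ar E V (strip u))"
    have "(SOME s. s \<in> cls Sig ar E V (strip u)) \<in> cls Sig ar E V (strip u)"
      by (rule someI, rule in_cls[OF strip_terms[OF u(1)]])
    then have e2: "eqv Sig ar E V (strip u) (SOME s. s \<in> cls Sig ar E V (strip u))" unfolding cls_def by simp
    have "eqv Sig ar E V (strip (SOME s. s \<in> c)) (strip u)" using eqv.sym[OF eqv_strip[OF e]] .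
    have "case_sum (Tunit Sig ar E V) id (phi Sig ar E V c) = cls Sig ar E V (strip u)" using a u(2) by simp
    moreover note eqv.trans[OF \<open>eqv Sig ar E V (strip (SOME s. s \<in> c)) (strip u)\<close> e2]
    ultimately show ?thesis by simp
  qed
qed

lemma part4:
  assumes C: "C \<in> Tc SS AS ES (Tc SS AS ES V)"
  shows "phi Sig ar E V (Tmult SS AS ES V C)
         = SFmult Sig ar E V (phi Sig ar E (SFc Sig ar E V) (Tmap SS AS ES (SFc Sig ar E V) (phi Sig ar E V) C))"
proof -
  let ?s0 = "\<lambda>c. SOME s. s \<in> c"
  let ?g = "case_sum (Tunit Sig ar E V) id"
  obtain t where t: "t \<in> terms SS AS (Tc SS AS ES V)" "C = cls SS AS ES (Tc SS AS ES V) t"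
    using C unfolding Tc_def by auto
  have L: "Tmult SS AS ES V C = cls SS AS ES V (subst ?s0 t)" using Tmult_cls[OF t(1) thS] t(2) by simp
  have pin: "\<forall>c\<in>Tc SS AS ES V. phi Sig ar E V c \<in> SFc Sig ar E V" using phi_in by blast
  have R: "Tmap SS AS ES (SFc Sig ar E V) (phi Sig ar E V) C = cls SS AS ES (SFc Sig ar E V) (map_trm id (phi Sig ar E V) t)"
    using Tmap_cls[OF t(1) pin] t(2) by simp
  have s0t: "\<forall>c\<in>Tc SS AS ES V. ?s0 c \<in> terms SS AS V" using s0_terms thS by blast
  have st: "subst ?s0 t \<in> terms SS AS V" using subst_terms[OF t(1) s0t] .
  have mt: "map_trm id (phi Sig ar E V) t \<in> terms SS AS (SFc Sig ar E V)"
    unfolding map_subst using t(1) pin by (auto intro!: subst_terms terms.var)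
  show ?thesis
  proof (cases t)
    case (Var c)
    then have cT: "c \<in> Tc SS AS ES V" using t(1) var_terms by metis
    then obtain u where u: "c = cls SS AS ES V u" unfolding Tc_def by auto
    have "?s0 c \<in> c" using Tc_cls_some[OF cT] .
    then have "eqv SS AS ES V u (?s0 c)" using u unfolding cls_def by simp
    then have "cls SS AS ES V (?s0 c) = c" using u cls_eq by metis
    then have l: "phi Sig ar E V (Tmult SS AS ES V C) = phi Sig ar E V c" using L Var by simp
    have "phi Sig ar E (SFc Sig ar E V) (cls SS AS ES (SFc Sig ar E V) (Var (phi Sig ar E V c))) = Inl (phi Sig ar E V c)"
      using phi_var[OF bspec[OF pin cT]] .
    then show ?thesis using l R Var by (simp add: SFmult_def)
  next
    case (Op g ts)
    have nv1: "\<forall>x. subst ?s0 t \<noteq> Var x" using Op by simp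
    have nv2: "\<forall>x. map_trm id (phi Sig ar E V) t \<noteq> Var x" using Op by simp
    have l: "phi Sig ar E V (Tmult SS AS ES V C) = Inr (cls Sig ar E V (subst (\<lambda>c. strip (?s0 c)) (strip t)))"
      using phi_nonvar[OF st nv1] L strip_subst[OF t(1), of ?s0] by simp
    have r1: "phi Sig ar E (SFc Sig ar E V) (Tmap SS AS ES (SFc Sig ar E V) (phi Sig ar E V) C)
        = Inr (cls Sig ar E (SFc Sig ar E V) (map_trm id (phi Sig ar E V) (strip t)))"
      using phi_nonvar[OF mt nv2] R strip_map[OF t(1), of "phi Sig ar E V"] by simp
    have ut: "map_trm id (phi Sig ar E V) (strip t) \<in> terms Sig ar (SFc Sig ar E V)"
      using strip_terms[OF mt] strip_map[OF t(1), of "phi Sig ar E V"] by simp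
    have gin: "\<forall>y\<in>SFc Sig ar E V. ?g y \<in> Tc Sig ar E V"
      unfolding SFc_def Tc_def Tunit_def by (auto intro: terms.var)
    have r2: "Tmap Sig ar E (Tc Sig ar E V) ?g (cls Sig ar E (SFc Sig ar E V) (map_trm id (phi Sig ar E V) (strip t)))
        = cls Sig ar E (Tc Sig ar E V) (map_trm id ?g (map_trm id (phi Sig ar E V) (strip t)))"
      using Tmap_cls[OF ut gin] .
    have gv: "\<forall>x\<in>SFc Sig ar E V. Var (?g x) \<in> terms Sig ar (Tc Sig ar E V)"
      using gin by (auto intro: terms.var)
    have gt: "map_trm id ?g (map_trm id (phi Sig ar E V) (strip t)) \<in> terms Sig ar (Tc Sig ar E V)"
      using subst_terms[OF ut gv] unfolding map_subst[of ?g] .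
    have r3: "Tmult Sig ar E V (cls Sig ar E (Tc Sig ar E V) (map_trm id ?g (map_trm id (phi Sig ar E V) (strip t))))
        = cls Sig ar E V (subst (\<lambda>c. ?s0 (?g (phi Sig ar E V c))) (strip t))"
      using Tmult_cls[OF gt th] unfolding map_subst subst_subst by simp
    have "eqv Sig ar E V (subst (\<lambda>c. strip (?s0 c)) (strip t)) (subst (\<lambda>c. ?s0 (?g (phi Sig ar E V c))) (strip t))"
      by (intro eqv_subst_cong[OF strip_terms[OF t(1)]] ballI pw)
    then have "cls Sig ar E V (subst (\<lambda>c. strip (?s0 c)) (strip t)) = cls Sig ar E V (subst (\<lambda>c. ?s0 (?g (phi Sig ar E V c))) (strip t))"
      by (rule cls_eq)
    moreover have sm: "SFmult Sig ar E V (Inr D) = Inr (Tmult Sig ar E V (Tmap Sig ar E (Tc Sig ar E V) ?g D))" for D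
      by (simp add: SFmult_def)
    ultimately show ?thesis by (simp only: l r1 sm r2 r3)
  qed
qed

end

theorem theorem1:
  fixes Sig :: "'f set" and ar :: "'f \<Rightarrow> nat"
    and E :: "(('f, nat) trm \<times> ('f, nat) trm) set"
  assumes "is_theory Sig ar E"
  shows
    "(\<forall>V :: 'x set. bij_betw (phi Sig ar E V)
        (Tc (sigS Sig) (arS ar) (eqS Sig ar E) V) (SFc Sig ar E V))
  \<and>
    (\<forall>(V :: 'x set) (W :: 'y set) f. (\<forall>x \<in> V. f x \<in> W) \<longrightarrow>
       (\<forall>C \<in> Tc (sigS Sig) (arS ar) (eqS Sig ar E) V.
          phi Sig ar E W (Tmap (sigS Sig) (arS ar) (eqS Sig ar E) W f C)
          = SFmap Sig ar E W f (phi Sig ar E V C)))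
  \<and>
    (\<forall>(V :: 'x set). \<forall>x \<in> V.
       phi Sig ar E V (Tunit (sigS Sig) (arS ar) (eqS Sig ar E) V x) = SFunit x)
  \<and>
    (\<forall>(V :: 'x set).
       \<forall>C \<in> Tc (sigS Sig) (arS ar) (eqS Sig ar E) (Tc (sigS Sig) (arS ar) (eqS Sig ar E) V).
         phi Sig ar E V (Tmult (sigS Sig) (arS ar) (eqS Sig ar E) V C)
         = SFmult Sig ar E V
             (phi Sig ar E (SFc Sig ar E V)
               (Tmap (sigS Sig) (arS ar) (eqS Sig ar E) (SFc Sig ar E V) (phi Sig ar E V) C)))"
proof (intro conjI allI ballI impI)
  fix V :: "'x set"
  show "bij_betw (phi Sig ar E V) (Tc (sigS Sig) (arS ar) (eqS Sig ar E) V) (SFc Sig ar E V)"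
    using part1[OF assms] .
next
  fix V :: "'x set" and W :: "'y set" and f C
  assume "\<forall>x\<in>V. f x \<in> W" "C \<in> Tc (sigS Sig) (arS ar) (eqS Sig ar E) V"
  then show "phi Sig ar E W (Tmap (sigS Sig) (arS ar) (eqS Sig ar E) W f C) = SFmap Sig ar E W f (phi Sig ar E V C)"
    by (rule part2[OF assms])
next
  fix V :: "'x set" and x assume "x \<in> V"
  then show "phi Sig ar E V (Tunit (sigS Sig) (arS ar) (eqS Sig ar E) V x) = SFunit x"
    by (rule part3[OF assms])
next
  fix V :: "'x set" and C
  assume "C \<in> Tc (sigS Sig) (arS ar) (eqS Sig ar E) (Tc (sigS Sig) (arS ar) (eqS Sig ar E) V)"
  then show "phi Sig ar E V (Tmult (sigS Sig) (arS ar) (eqS Sig ar E) V C) =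
         SFmult Sig ar E V (phi Sig ar E (SFc Sig ar E V) (Tmap (sigS Sig) (arS ar) (eqS Sig ar E) (SFc Sig ar E V) (phi Sig ar E V) C))"
    by (rule part4[OF assms])
qed

end
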